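(* Let $d\ge1$, $n\ge2$ be integers, $\kappa_d$ the volume of the $d$-dimensional unit ball, $V\ge0$, $c\in(0,\infty)$, $-d/2<\tau_1<\dots<\tau_n$ reals, $a_i=\tau_i+d$, $x_i=\tau_i+d/2$. Let $\Sigma_n^{\mathrm{sb}}$ have entries $\frac{Vd\kappa_d}{2(x_i+x_j)}$, $\Sigma_n^{\mathrm{sp}}$ entries $\frac{Vd^2\kappa_d^2}{a_ia_j}$, and $\Sigma_n^{\mathrm{cr}}=\Sigma_n^{\mathrm{sb}}+c\Sigma_n^{\mathrm{sp}}$ if $c\le1$, $\Sigma_n^{\mathrm{cr}}=\frac1c\Sigma_n^{\mathrm{sb}}+\Sigma_n^{\mathrm{sp}}$ if $c>1$, with eigenvalues $\lambda_1^{\mathrm{cr}}\le\dots\le\lambda_n^{\mathrm{cr}}$. Put $Q=\sum_{l,k=1}^n\frac{n}{(x_k+x_l)^2}-\big(\sum_{i=1}^n\frac1{2x_i}\big)^2$, $$\bar S_n=\frac{Vd\kappa_d\big(\sum_{i=1}^n\frac1{2x_i}+\sqrt{(n-1)Q}\big)}{2n},\qquad \underline S_n=\frac{Vd\kappa_d\prod_{1\le i<j\le n}(x_i-x_j)^2}{2\prod_{1\le i,j\le n}(x_i+x_j)\Big(\frac{\sum_{i=1}^n\frac{\sqrt{n-1}}{2x_i}+\sqrt Q}{n\sqrt{n-1}}\Big)^{n-1}}.$$ Then $\underline U_n\le\lambda_1^{\mathrm{cr}}\le\dots\le\lambda_n^{\mathrm{cr}}\le\bar U_n$, where (i) for $c\in(0,1]$: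 $\underline U_n=\underline S_n$ and $\bar U_n=\bar S_n+\sum_{i=1}^n\frac{cVd^2\kappa_d^2}{a_i^2}$; (ii) for $c\in(1,\infty)$: $\underline U_n=\underline S_n/c$ and $\bar U_n=\bar S_n/c+\sum_{i=1}^n\frac{Vd^2\kappa_d^2}{a_i^2}$.
   Context: $\Sigma_n^{\mathrm{cr}}$ is the asymptotic covariance matrix of normalized length power functionals in the critical regime $t\delta_t^d\to c$. *)

theory Defs
  imports "HOL-Analysis.Ball_Volume" "Jordan_Normal_Form.Char_Poly"
begin

text \<open>Indices are 0-based: i ranges over 0..n-1 (paper: 1..n).
  kappa_d = unit_ball_vol d is the volume of the d-dimensional unit ball.\<close>

definition x_par :: "nat \<Rightarrow> (nat \<Rightarrow> real) \<Rightarrow> nat \<Rightarrow> real" where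
  "x_par d \<tau> i = \<tau> i + real d / 2"

definition a_par :: "nat \<Rightarrow> (nat \<Rightarrow> real) \<Rightarrow> nat \<Rightarrow> real" where
  "a_par d \<tau> i = \<tau> i + real d"

definition Sigma_sb :: "nat \<Rightarrow> nat \<Rightarrow> real \<Rightarrow> (nat \<Rightarrow> real) \<Rightarrow> real mat" where
  "Sigma_sb n d V \<tau> = mat n n (\<lambda>(i,j).
      V * real d * unit_ball_vol (real d) / (2 * (x_par d \<tau> i + x_par d \<tau> j)))"

definition Sigma_sp :: "nat \<Rightarrow> nat \<Rightarrow> real \<Rightarrow> (nat \<Rightarrow> real) \<Rightarrow> real mat" where
  "Sigma_sp n d V \<tau> = mat n n (\<lambda>(i,j).
      V * real d ^ 2 * unit_ball_vol (real d) ^ 2 / (a_par d \<tau> i * a_par d \<tau> j))"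

definition Sigma_cr :: "nat \<Rightarrow> nat \<Rightarrow> real \<Rightarrow> real \<Rightarrow> (nat \<Rightarrow> real) \<Rightarrow> real mat" where
  "Sigma_cr n d V c \<tau> =
     (if c \<le> 1 then Sigma_sb n d V \<tau> + c \<cdot>\<^sub>m Sigma_sp n d V \<tau>
      else (1 / c) \<cdot>\<^sub>m Sigma_sb n d V \<tau> + Sigma_sp n d V \<tau>)"

definition Q_par :: "nat \<Rightarrow> nat \<Rightarrow> (nat \<Rightarrow> real) \<Rightarrow> real" where
  "Q_par n d \<tau> = (\<Sum>l<n. \<Sum>k<n. real n / (x_par d \<tau> k + x_par d \<tau> l)^2)
                 - (\<Sum>i<n. 1 / (2 * x_par d \<tau> i))^2"

definition S_upper :: "nat \<Rightarrow> nat \<Rightarrow> real \<Rightarrow> (nat \<Rightarrow> real) \<Rightarrow> real" where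
  "S_upper n d V \<tau> = V * real d * unit_ball_vol (real d) *
     ((\<Sum>i<n. 1 / (2 * x_par d \<tau> i)) + sqrt ((real n - 1) * Q_par n d \<tau>)) / (2 * real n)"

definition S_lower :: "nat \<Rightarrow> nat \<Rightarrow> real \<Rightarrow> (nat \<Rightarrow> real) \<Rightarrow> real" where
  "S_lower n d V \<tau> = V * real d * unit_ball_vol (real d) *
     (\<Prod>j<n. \<Prod>i<j. (x_par d \<tau> i - x_par d \<tau> j)^2) /
     (2 * (\<Prod>i<n. \<Prod>j<n. x_par d \<tau> i + x_par d \<tau> j) *
      (((\<Sum>i<n. sqrt (real n - 1) / (2 * x_par d \<tau> i)) + sqrt (Q_par n d \<tau>))
        / (real n * sqrt (real n - 1))) ^ (n - 1))"

end

theory Submission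
  imports Defs
begin


definition qf :: "nat \<Rightarrow> real mat \<Rightarrow> (nat \<Rightarrow> real) \<Rightarrow> real" where
  "qf n A x = (\<Sum>i<n. \<Sum>j<n. x i * A $$ (i,j) * x j)"

definition symm :: "nat \<Rightarrow> real mat \<Rightarrow> bool" where
  "symm n A = (\<forall>i<n. \<forall>j<n. A $$ (i,j) = A $$ (j,i))"

definition psd :: "nat \<Rightarrow> real mat \<Rightarrow> bool" where
  "psd n A = (\<forall>x. 0 \<le> qf n A x)"

lemma mult_entry:
  assumes "A \<in> carrier_mat n m" "B \<in> carrier_mat m p" "i < n" "j < p"
  shows "(A * B) $$ (i,j) = (\<Sum>k<m. A $$ (i,k) * B $$ (k,j))"
  using assms by (simp add: scalar_prod_def atLeast0LessThan)

lemma schur_det: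
  fixes A :: "real mat"
  assumes A: "A \<in> carrier_mat (Suc n) (Suc n)" and s: "A $$ (0,0) \<noteq> 0"
  shows "det A = A $$ (0,0) * det (mat n n (\<lambda>(i,j). A $$ (Suc i, Suc j) - A $$ (Suc i, 0) * A $$ (0, Suc j) / A $$ (0,0)))"
proof -
  define s where "s = A $$ (0,0)"
  define E where "E = mat (Suc n) (Suc n) (\<lambda>(i,j). if i = j then 1 else if j = 0 then - A $$ (i,0) / s else (0::real))"
  have E: "E \<in> carrier_mat (Suc n) (Suc n)" unfolding E_def by auto
  have detE: "det E = 1"
  proof -
    have "det E = prod_list (diag_mat E)"
      by (rule det_lower_triangular[OF _ E], auto simp: E_def)
    also have "diag_mat E = map (\<lambda>i. 1) [0..<Suc n]" unfolding diag_mat_def E_def by auto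
    finally show ?thesis by (simp add: map_replicate_const)
  qed
  have detEA: "det (E * A) = det A" using det_mult[OF E A] detE by simp
  have EA: "E * A \<in> carrier_mat (Suc n) (Suc n)" using E A by auto
  have ent: "(E * A) $$ (i,j) = (if i = 0 then A $$ (0,j) else A $$ (i,j) - A $$ (i,0) / s * A $$ (0,j))"
    if "i < Suc n" "j < Suc n" for i j
  proof -
    have "(E * A) $$ (i,j) = (\<Sum>k<Suc n. E $$ (i,k) * A $$ (k,j))"
      by (rule mult_entry[OF E A that])
    also have "\<dots> = (\<Sum>k<Suc n. (if k = i then 1 else if k = 0 then - A $$ (i,0) / s else 0) * A $$ (k,j))"
      by (rule sum.cong, auto simp: E_def that)
    also have "\<dots> = (if i = 0 then A $$ (0,j) else A $$ (i,j) - A $$ (i,0) / s * A $$ (0,j))"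
    proof (cases "i = 0")
      case True
      have "(\<Sum>k<Suc n. (if k = i then 1 else if k = 0 then - A $$ (i,0) / s else 0) * A $$ (k,j))
        = (\<Sum>k<Suc n. (if k = 0 then A $$ (k,j) else 0))"
        by (rule sum.cong, auto simp: True)
      then show ?thesis using True by simp
    next
      case False
      have "(\<Sum>k<Suc n. (if k = i then 1 else if k = 0 then - A $$ (i,0) / s else 0) * A $$ (k,j))
        = (\<Sum>k<Suc n. (if k = i then A $$ (k,j) else 0) + (if k = 0 then - A $$ (i,0) / s * A $$ (k,j) else 0))"
        by (rule sum.cong, auto simp: False)
      also have "\<dots> = A $$ (i,j) - A $$ (i,0) / s * A $$ (0,j)"
        using that by (simp add: sum.distrib)
      finally show ?thesis using False by simp
    qed
    finally show ?thesis .
  qed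
  have "det (E * A) = (\<Sum>i<Suc n. (E * A) $$ (i,0) * cofactor (E * A) i 0)"
    by (rule laplace_expansion_column[OF EA], simp)
  also have "\<dots> = (E * A) $$ (0,0) * cofactor (E * A) 0 0"
    by (subst sum.lessThan_Suc_shift, simp add: ent s_def s)
  also have "cofactor (E * A) 0 0 = det (mat_delete (E * A) 0 0)" by (simp add: cofactor_def)
  also have "mat_delete (E * A) 0 0 = mat n n (\<lambda>(i,j). A $$ (Suc i, Suc j) - A $$ (Suc i, 0) * A $$ (0, Suc j) / A $$ (0,0))"
  proof (rule eq_matI)
    fix i j assume "i < dim_row (mat n n (\<lambda>(i,j). A $$ (Suc i, Suc j) - A $$ (Suc i, 0) * A $$ (0, Suc j) / A $$ (0,0)))"
      "j < dim_col (mat n n (\<lambda>(i,j). A $$ (Suc i, Suc j) - A $$ (Suc i, 0) * A $$ (0, Suc j) / A $$ (0,0)))"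
    hence ij: "i < n" "j < n" by auto
    have "mat_delete (E*A) 0 0 $$ (i,j) = (E*A) $$ (Suc i, Suc j)"
      using EA ij unfolding mat_delete_def by (simp del: index_mult_mat)
    also have "\<dots> = A $$ (Suc i, Suc j) - A $$ (Suc i, 0) * A $$ (0, Suc j) / A $$ (0,0)"
      using ent[of "Suc i" "Suc j"] ij by (simp add: s_def)
    finally show "mat_delete (E*A) 0 0 $$ (i,j) = mat n n (\<lambda>(i,j). A $$ (Suc i, Suc j) - A $$ (Suc i, 0) * A $$ (0, Suc j) / A $$ (0,0)) $$ (i,j)"
      using ij by simp
  qed (use EA in auto)
  finally show ?thesis using detEA ent[of 0 0] by (simp add: s_def)
qed

lemma scale_det:
  fixes M :: "real mat"
  assumes M: "M \<in> carrier_mat n n"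
  shows "det (mat n n (\<lambda>(i,j). a i * M $$ (i,j) * b j)) = (\<Prod>i<n. a i) * (\<Prod>j<n. b j) * det M"
proof -
  have "det (mat n n (\<lambda>(i,j). a i * M $$ (i,j) * b j)) =
     (\<Sum>p\<in>{p. p permutes {0..<n}}. signof p * (\<Prod>i = 0..<n. a i * M $$ (i, p i) * b (p i)))"
    by (subst det_def'[of _ n], simp, intro sum.cong refl arg_cong2[where f="(*)"] prod.cong,
        auto simp: permutes_in_image)
  also have "\<dots> = (\<Sum>p\<in>{p. p permutes {0..<n}}. (\<Prod>i<n. a i) * (\<Prod>j<n. b j) * (signof p * (\<Prod>i = 0..<n. M $$ (i, p i))))"
  proof (rule sum.cong[OF refl])
    fix p assume p: "p \<in> {p. p permutes {0..<n}}"
    have "(\<Prod>i = 0..<n. b (p i)) = (\<Prod>j = 0..<n. b j)"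
      using prod.permute[of p "{0..<n}" b] p by (simp add: comp_def)
    then show "signof p * (\<Prod>i = 0..<n. a i * M $$ (i, p i) * b (p i)) = (\<Prod>i<n. a i) * (\<Prod>j<n. b j) * (signof p * (\<Prod>i = 0..<n. M $$ (i, p i)))"
      by (simp add: prod.distrib atLeast0LessThan)
  qed
  also have "\<dots> = (\<Prod>i<n. a i) * (\<Prod>j<n. b j) * det M"
    by (subst det_def'[OF M], simp add: sum_distrib_left)
  finally show ?thesis .
qed



definition cmat :: "nat \<Rightarrow> (nat \<Rightarrow> real) \<Rightarrow> real mat" where
  "cmat n x = mat n n (\<lambda>(i,j). 1 / (x i + x j))"

definition cprod :: "nat \<Rightarrow> (nat \<Rightarrow> real) \<Rightarrow> real" where
  "cprod n x = (\<Prod>j<n. \<Prod>i<j. (x i - x j)^2) / (\<Prod>i<n. \<Prod>j<n. x i + x j)"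

lemma cauchy_id:
  fixes a b c :: real
  assumes "a > 0" "b > 0" "c > 0"
  shows "1/(a+b) - 1/(a+c) * (1/(c+b)) / (1/(c+c)) = (a-c)/(a+c) * (1/(a+b)) * ((b-c)/(b+c))"
proof -
  have "a + b \<noteq> 0" "a + c \<noteq> 0" "c + b \<noteq> 0" "b + c \<noteq> 0" "c + c \<noteq> 0" using assms by auto
  then show ?thesis by (simp add: divide_simps) (simp add: algebra_simps)
qed

lemma cauchy_det:
  assumes "\<forall>i<n. x i > 0"
  shows "det (cmat n x) = cprod n x"
  using assms
proof (induction n arbitrary: x)
  case 0
  then show ?case by (simp add: cmat_def cprod_def)
next
  case (Suc n)
  define y where "y = (\<lambda>i. x (Suc i))"
  have x0: "x 0 > 0" using Suc.prems by auto
  have ypos: "\<forall>i<n. y i > 0" using Suc.prems by (auto simp: y_def)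
  define al where "al = (\<lambda>i. (y i - x 0) / (y i + x 0))"
  have C: "cmat (Suc n) x \<in> carrier_mat (Suc n) (Suc n)" by (simp add: cmat_def)
  have c00: "cmat (Suc n) x $$ (0,0) = 1 / (x 0 + x 0)" by (simp add: cmat_def)
  have "det (cmat (Suc n) x) = 1 / (x 0 + x 0) * det (mat n n (\<lambda>(i,j). cmat (Suc n) x $$ (Suc i, Suc j) - cmat (Suc n) x $$ (Suc i, 0) * cmat (Suc n) x $$ (0, Suc j) / cmat (Suc n) x $$ (0,0)))"
    using schur_det[OF C] c00 x0 by simp
  also have "mat n n (\<lambda>(i,j). cmat (Suc n) x $$ (Suc i, Suc j) - cmat (Suc n) x $$ (Suc i, 0) * cmat (Suc n) x $$ (0, Suc j) / cmat (Suc n) x $$ (0,0))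
     = mat n n (\<lambda>(i,j). al i * cmat n y $$ (i,j) * al j)"
  proof (rule cong_mat[OF refl refl])
    fix i j assume ij: "i < n" "j < n"
    have a: "y i > 0" "y j > 0" using ypos ij by auto
      have e1: "cmat (Suc n) x $$ (Suc i, Suc j) = 1/(y i + y j)" "cmat (Suc n) x $$ (Suc i, 0) = 1/(y i + x 0)"
        "cmat (Suc n) x $$ (0, Suc j) = 1/(x 0 + y j)" "cmat n y $$ (i,j) = 1/(y i + y j)"
        using ij by (simp_all add: cmat_def y_def)
    show "(case (i, j) of (i, j) \<Rightarrow> cmat (Suc n) x $$ (Suc i, Suc j) - cmat (Suc n) x $$ (Suc i, 0) * cmat (Suc n) x $$ (0, Suc j) / cmat (Suc n) x $$ (0, 0)) =
          (case (i, j) of (i, j) \<Rightarrow> al i * cmat n y $$ (i, j) * al j)"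
      unfolding split e1 c00 al_def by (rule cauchy_id[OF a x0])
  qed
  also have "det (mat n n (\<lambda>(i,j). al i * cmat n y $$ (i,j) * al j)) = (\<Prod>i<n. al i) * (\<Prod>j<n. al j) * det (cmat n y)"
    by (rule scale_det, simp add: cmat_def)
  also have "det (cmat n y) = cprod n y" using Suc.IH ypos by blast
  finally have L: "det (cmat (Suc n) x) = 1 / (x 0 + x 0) * ((\<Prod>i<n. al i) * (\<Prod>i<n. al i) * cprod n y)" by simp
  have N: "(\<Prod>j<Suc n. \<Prod>i<j. (x i - x j)^2) = (\<Prod>j<n. (y j - x 0)^2) * (\<Prod>j<n. \<Prod>i<j. (y i - y j)^2)"
  proof -
    have "(\<Prod>j<Suc n. \<Prod>i<j. (x i - x j)^2) = (\<Prod>j<n. \<Prod>i<Suc j. (x i - x (Suc j))^2)"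
      by (simp only: prod.lessThan_Suc_shift) simp
    also have "\<dots> = (\<Prod>j<n. (x 0 - x (Suc j))^2 * (\<Prod>i<j. (x (Suc i) - x (Suc j))^2))"
      by (simp only: prod.lessThan_Suc_shift)
    finally show ?thesis by (simp add: y_def prod.distrib power2_commute)
  qed
  have D: "(\<Prod>i<Suc n. \<Prod>j<Suc n. x i + x j) = (x 0 + x 0) * ((\<Prod>j<n. y j + x 0) * (\<Prod>j<n. y j + x 0)) * (\<Prod>i<n. \<Prod>j<n. y i + y j)"
  proof -
    have "(\<Prod>i<Suc n. \<Prod>j<Suc n. x i + x j) = (\<Prod>j<Suc n. x 0 + x j) * (\<Prod>i<n. \<Prod>j<Suc n. x (Suc i) + x j)"
      by (simp only: prod.lessThan_Suc_shift)
    also have "\<dots> = ((x 0 + x 0) * (\<Prod>j<n. x 0 + x (Suc j))) * (\<Prod>i<n. (x (Suc i) + x 0) * (\<Prod>j<n. x (Suc i) + x (Suc j)))"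
      by (simp only: prod.lessThan_Suc_shift)
    finally show ?thesis by (simp add: y_def prod.distrib add.commute mult_ac)
  qed
  have al: "(\<Prod>i<n. al i) = (\<Prod>i<n. y i - x 0) / (\<Prod>i<n. y i + x 0)"
    by (simp add: al_def prod_dividef)
  have nz1: "(\<Prod>i<n. y i + x 0) \<noteq> 0" using ypos x0 by (auto simp: prod_zero_iff)
  have nz2: "(\<Prod>i<n. \<Prod>j<n. y i + y j) \<noteq> 0" using ypos by (auto simp: prod_zero_iff) (smt (verit))
  have sq: "(\<Prod>j<n. (y j - x 0)^2) = (\<Prod>i<n. y i - x 0) * (\<Prod>i<n. y i - x 0)"
    by (simp add: power2_eq_square prod.distrib)
  show ?case unfolding L cprod_def N D al sq using x0 nz1 nz2
    by (simp add: field_simps)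
qed



definition schur :: "nat \<Rightarrow> real mat \<Rightarrow> real mat" where
  "schur n A = mat n n (\<lambda>(i,j). A $$ (Suc i, Suc j) - A $$ (Suc i, 0) * A $$ (0, Suc j) / A $$ (0,0))"

lemma qf_split:
  assumes "symm (Suc n) A"
  shows "qf (Suc n) A x = x 0 * A $$ (0,0) * x 0 + 2 * x 0 * (\<Sum>j<n. A $$ (0, Suc j) * x (Suc j))
     + (\<Sum>i<n. \<Sum>j<n. x (Suc i) * A $$ (Suc i, Suc j) * x (Suc j))"
proof -
  have sy: "A $$ (Suc i, 0) = A $$ (0, Suc i)" if "i < n" for i
    using assms that unfolding symm_def by auto
  have "qf (Suc n) A x = x 0 * A $$ (0,0) * x 0 + (\<Sum>j<n. x 0 * A $$ (0, Suc j) * x (Suc j))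
     + ((\<Sum>i<n. x (Suc i) * A $$ (Suc i, 0) * x 0) + (\<Sum>i<n. \<Sum>j<n. x (Suc i) * A $$ (Suc i, Suc j) * x (Suc j)))"
    unfolding qf_def by (simp only: sum.lessThan_Suc_shift sum.distrib)
  also have "(\<Sum>i<n. x (Suc i) * A $$ (Suc i, 0) * x 0) = (\<Sum>j<n. x 0 * A $$ (0, Suc j) * x (Suc j))"
    by (rule sum.cong, auto simp: sy)
  finally show ?thesis by (simp add: sum_distrib_left mult_ac)
qed

lemma qf_schur:
  assumes "symm (Suc n) A" and s: "A $$ (0,0) > 0"
  shows "qf (Suc n) A x = A $$ (0,0) * (x 0 + (\<Sum>j<n. A $$ (0, Suc j) * x (Suc j)) / A $$ (0,0))^2
      + qf n (schur n A) (\<lambda>i. x (Suc i))"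
proof -
  define s where "s = A $$ (0,0)"
  define b where "b = (\<Sum>j<n. A $$ (0, Suc j) * x (Suc j))"
  have sy: "A $$ (Suc i, 0) = A $$ (0, Suc i)" if "i < n" for i
    using assms that unfolding symm_def by auto
  have "qf n (schur n A) (\<lambda>i. x (Suc i)) = (\<Sum>i<n. \<Sum>j<n. x (Suc i) * A $$ (Suc i, Suc j) * x (Suc j)
      - (x (Suc i) * A $$ (0, Suc i)) * (A $$ (0, Suc j) * x (Suc j)) / s)"
    unfolding qf_def schur_def s_def
    by (intro sum.cong refl, auto simp: sy algebra_simps)
  also have "\<dots> = (\<Sum>i<n. \<Sum>j<n. x (Suc i) * A $$ (Suc i, Suc j) * x (Suc j)) - b * b / s"
    by (simp add: sum_subtractf b_def sum_divide_distrib[symmetric] sum_product mult_ac)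
  finally have "qf n (schur n A) (\<lambda>i. x (Suc i)) = (\<Sum>i<n. \<Sum>j<n. x (Suc i) * A $$ (Suc i, Suc j) * x (Suc j)) - b * b / s" .
  moreover have "s > 0" using s s_def by simp
  moreover have "s * (x 0 + b/s)^2 = x 0 * s * x 0 + 2 * x 0 * b + b*b/s"
    using \<open>s > 0\<close> by (simp add: field_simps power2_eq_square)
  ultimately show ?thesis unfolding qf_split[OF assms(1)] s_def[symmetric] b_def[symmetric]
    by linarith
qed

lemma schur_carrier: "schur n A \<in> carrier_mat n n" by (simp add: schur_def)

lemma symm_schur: "symm (Suc n) A \<Longrightarrow> symm n (schur n A)"
  unfolding symm_def schur_def by auto

lemma psd_schur:
  assumes "symm (Suc n) A" "A $$ (0,0) > 0"
  shows "psd (Suc n) A \<longleftrightarrow> psd n (schur n A)"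
proof
  assume p: "psd (Suc n) A"
  show "psd n (schur n A)" unfolding psd_def
  proof
    fix y
    define x where "x = (\<lambda>i. if i = 0 then - (\<Sum>j<n. A $$ (0, Suc j) * y j) / A $$ (0,0) else y (i - 1))"
    have "0 \<le> qf (Suc n) A x" using p psd_def by blast
    also have "\<dots> = qf n (schur n A) y" unfolding qf_schur[OF assms] by (simp add: x_def)
    finally show "0 \<le> qf n (schur n A) y" .
  qed
next
  assume p: "psd n (schur n A)"
  show "psd (Suc n) A" unfolding psd_def
  proof
    fix x
    show "0 \<le> qf (Suc n) A x" unfolding qf_schur[OF assms] using p assms(2) unfolding psd_def
      by (intro add_nonneg_nonneg mult_nonneg_nonneg) auto
  qed
qed

lemma sum_delta_r: "k < (n::nat) \<Longrightarrow> (\<Sum>j<n. f j * (if j = k then 1 else (0::real))) = f k"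
proof -
  assume k: "k < n"
  have "(\<Sum>j<n. f j * (if j = k then 1 else (0::real))) = (\<Sum>j<n. if j = k then f j else 0)"
    by (rule sum.cong) auto
  also have "\<dots> = f k" using k by (subst sum.delta) auto
  finally show ?thesis .
qed

lemma sum_delta_l: "k < (n::nat) \<Longrightarrow> (\<Sum>j<n. (if j = k then 1 else (0::real)) * f j) = f k"
proof -
  assume k: "k < n"
  have "(\<Sum>j<n. (if j = k then 1 else (0::real)) * f j) = (\<Sum>j<n. if j = k then f j else 0)"
    by (rule sum.cong) auto
  also have "\<dots> = f k" using k by (subst sum.delta) auto
  finally show ?thesis .
qed

lemma qf_delta: "k < n \<Longrightarrow> qf n A (\<lambda>i. if i = k then 1 else 0) = A $$ (k,k)"
  unfolding qf_def by (simp add: sum_delta_r sum_delta_l)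

lemma qf_scale: "qf n (mat n n (\<lambda>(i,j). a i * M $$ (i,j) * a j)) y = qf n M (\<lambda>i. a i * y i)"
  unfolding qf_def by (intro sum.cong refl, simp add: mult_ac)

lemma cmat_schur:
  assumes "\<forall>i<Suc n. x i > 0"
  shows "schur n (cmat (Suc n) x) = mat n n (\<lambda>(i,j). ((x (Suc i) - x 0) / (x (Suc i) + x 0)) * cmat n (\<lambda>i. x (Suc i)) $$ (i,j) * ((x (Suc j) - x 0) / (x (Suc j) + x 0)))"
unfolding schur_def proof (rule cong_mat[OF refl refl])
  fix i j assume ij: "i < n" "j < n"
  have a: "x (Suc i) > 0" "x (Suc j) > 0" "x 0 > 0" using assms ij by auto
  have e1: "cmat (Suc n) x $$ (Suc i, Suc j) = 1/(x (Suc i) + x (Suc j))" "cmat (Suc n) x $$ (Suc i, 0) = 1/(x (Suc i) + x 0)"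
        "cmat (Suc n) x $$ (0, Suc j) = 1/(x 0 + x (Suc j))" "cmat n (\<lambda>i. x (Suc i)) $$ (i,j) = 1/(x (Suc i) + x (Suc j))"
        "cmat (Suc n) x $$ (0,0) = 1/(x 0 + x 0)"
        using ij by (simp_all add: cmat_def)
  show "(case (i, j) of (i, j) \<Rightarrow> cmat (Suc n) x $$ (Suc i, Suc j) - cmat (Suc n) x $$ (Suc i, 0) * cmat (Suc n) x $$ (0, Suc j) / cmat (Suc n) x $$ (0, 0)) =
        (case (i, j) of (i, j) \<Rightarrow> ((x (Suc i) - x 0) / (x (Suc i) + x 0)) * cmat n (\<lambda>i. x (Suc i)) $$ (i,j) * ((x (Suc j) - x 0) / (x (Suc j) + x 0)))"
    unfolding split e1 by (rule cauchy_id[OF a])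
qed

lemma symm_cmat: "symm n (cmat n x)" unfolding symm_def cmat_def by (auto simp: add.commute)

lemma psd_cmat:
  assumes "\<forall>i<n. x i > 0"
  shows "psd n (cmat n x)"
  using assms
proof (induction n arbitrary: x)
  case 0
  then show ?case by (simp add: psd_def qf_def)
next
  case (Suc n)
  have s: "cmat (Suc n) x $$ (0,0) > 0" using Suc.prems by (simp add: cmat_def)
  have "psd n (cmat n (\<lambda>i. x (Suc i)))" using Suc.IH Suc.prems by auto
  then have "psd n (schur n (cmat (Suc n) x))"
    unfolding cmat_schur[OF Suc.prems] psd_def qf_scale by blast
  then show ?case using psd_schur[OF symm_cmat s] by blast
qed

lemma hadamard:
  assumes "A \<in> carrier_mat n n" "symm n A" "psd n A"
  shows "det A \<le> (\<Prod>i<n. A $$ (i,i))"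
  using assms
proof (induction n arbitrary: A)
  case 0
  then show ?case by simp
next
  case (Suc n)
  note A = Suc.prems(1)
  define s where "s = A $$ (0,0)"
  have "qf (Suc n) A (\<lambda>i. if i = 0 then 1 else 0) = A $$ (0,0)" by (rule qf_delta) simp
  then have s0: "s \<ge> 0" using Suc.prems(3) unfolding psd_def s_def by metis
  have pr: "(\<Prod>i<Suc n. A $$ (i,i)) = s * (\<Prod>i<n. A $$ (Suc i, Suc i))"
    by (simp only: prod.lessThan_Suc_shift s_def)
  show ?case
  proof (cases "s = 0")
    case True
    have row0: "A $$ (0, j) = 0" if "j < Suc n" for j
    proof (cases j)
      case 0 then show ?thesis using True s_def by simp
    next
      case (Suc k)
      with that have k: "k < n" by simp
      define b where "b = A $$ (0, Suc k)"
      define d where "d = A $$ (Suc k, Suc k)"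
      have q: "0 \<le> 2 * t * b + d" for t
      proof -
        define x where "x = (\<lambda>i. if i = 0 then t else if i = Suc k then 1 else (0::real))"
        have "0 \<le> qf (Suc n) A x" using Suc.prems(3) psd_def by blast
        also have "\<dots> = 2 * t * b + d"
          unfolding qf_split[OF Suc.prems(2)] using True k
          by (simp add: x_def s_def b_def d_def sum_delta_r sum_delta_l)
        finally show ?thesis .
      qed
      show ?thesis
      proof (rule ccontr)
        assume "A $$ (0, j) \<noteq> 0"
        then have b0: "b \<noteq> 0" using Suc b_def by simp
        have "0 \<le> 2 * (- (d + 1) / (2 * b)) * b + d" by (rule q)
        also have "\<dots> = -1" using b0 by (simp add: field_simps)
        finally show False by simp
      qed
    qed
    have "det A = (\<Sum>j<Suc n. A $$ (0,j) * cofactor A 0 j)"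
      by (rule laplace_expansion_row[OF A], simp)
    also have "\<dots> = 0" by (simp add: row0)
    finally have "det A = 0" .
    moreover have "(\<Prod>i<Suc n. A $$ (i,i)) = 0" using pr True by (simp only: mult_zero_left)
    ultimately show ?thesis by linarith
  next
    case False
    with s0 have sp: "s > 0" by simp
    have dA: "det A = s * det (schur n A)" unfolding schur_def s_def
      by (rule schur_det[OF A], insert sp s_def, simp)
    have sy: "symm n (schur n A)" by (rule symm_schur[OF Suc.prems(2)])
    have ps: "psd n (schur n A)" using psd_schur[OF Suc.prems(2)] sp s_def Suc.prems(3) by simp
    have ih: "det (schur n A) \<le> (\<Prod>i<n. schur n A $$ (i,i))"
      by (rule Suc.IH[OF schur_carrier sy ps])
    have "(\<Prod>i<n. schur n A $$ (i,i)) \<le> (\<Prod>i<n. A $$ (Suc i, Suc i))"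
    proof (rule prod_mono)
      fix i assume i: "i \<in> {..<n}"
      have "qf n (schur n A) (\<lambda>k. if k = i then 1 else 0) = schur n A $$ (i,i)" by (rule qf_delta) (use i in simp)
      then have "0 \<le> schur n A $$ (i,i)" using ps unfolding psd_def by metis
      moreover have "schur n A $$ (i,i) = A $$ (Suc i, Suc i) - A $$ (0, Suc i) * A $$ (0, Suc i) / s"
        using i Suc.prems(2) unfolding schur_def symm_def s_def by auto
      moreover have "A $$ (0, Suc i) * A $$ (0, Suc i) / s \<ge> 0" using sp by simp
      ultimately show "0 \<le> schur n A $$ (i,i) \<and> schur n A $$ (i,i) \<le> A $$ (Suc i, Suc i)" by linarith
    qed
    then have "s * det (schur n A) \<le> s * (\<Prod>i<n. A $$ (Suc i, Suc i))"
      using ih sp by (intro mult_left_mono) auto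
    then show ?thesis using dA pr by simp
  qed
qed



lemma QAQ_entry:
  assumes Q: "Q \<in> carrier_mat n n" and A: "A \<in> carrier_mat n n" and ij: "i < n" "j < n"
  shows "(Q * A * Q) $$ (i,j) = (\<Sum>l<n. \<Sum>k<n. Q $$ (i,k) * A $$ (k,l) * Q $$ (l,j))"
proof -
  have QA: "Q * A \<in> carrier_mat n n" using Q A by auto
  have "(Q * A * Q) $$ (i,j) = (\<Sum>l<n. (Q * A) $$ (i,l) * Q $$ (l,j))" by (rule mult_entry[OF QA Q ij])
  also have "\<dots> = (\<Sum>l<n. (\<Sum>k<n. Q $$ (i,k) * A $$ (k,l)) * Q $$ (l,j))"
    by (rule sum.cong, auto simp: mult_entry[OF Q A] ij)
  finally show ?thesis by (simp add: sum_distrib_right)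
qed

lemma qf_QAQ:
  assumes Q: "Q \<in> carrier_mat n n" and A: "A \<in> carrier_mat n n" and sQ: "symm n Q"
  shows "qf n (Q * A * Q) x = qf n A (\<lambda>k. \<Sum>j<n. Q $$ (k,j) * x j)"
proof -
  have "qf n (Q * A * Q) x = (\<Sum>i<n. \<Sum>j<n. \<Sum>l<n. \<Sum>k<n. x i * Q $$ (i,k) * A $$ (k,l) * Q $$ (l,j) * x j)"
    unfolding qf_def
    by (intro sum.cong refl, simp add: QAQ_entry[OF Q A] sum_distrib_left sum_distrib_right mult_ac)
  also have "\<dots> = (\<Sum>i<n. \<Sum>l<n. \<Sum>j<n. \<Sum>k<n. x i * Q $$ (i,k) * A $$ (k,l) * Q $$ (l,j) * x j)"
    by (rule sum.cong[OF refl], rule sum.swap)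
  also have "\<dots> = (\<Sum>i<n. \<Sum>l<n. \<Sum>k<n. \<Sum>j<n. x i * Q $$ (i,k) * A $$ (k,l) * Q $$ (l,j) * x j)"
    by (rule sum.cong[OF refl], rule sum.cong[OF refl], rule sum.swap)
  also have "\<dots> = (\<Sum>i<n. \<Sum>k<n. \<Sum>l<n. \<Sum>j<n. x i * Q $$ (i,k) * A $$ (k,l) * Q $$ (l,j) * x j)"
    by (rule sum.cong[OF refl], rule sum.swap)
  also have "\<dots> = (\<Sum>k<n. \<Sum>i<n. \<Sum>l<n. \<Sum>j<n. x i * Q $$ (i,k) * A $$ (k,l) * Q $$ (l,j) * x j)"
    by (rule sum.swap)
  also have "\<dots> = (\<Sum>k<n. \<Sum>l<n. \<Sum>i<n. \<Sum>j<n. x i * Q $$ (i,k) * A $$ (k,l) * Q $$ (l,j) * x j)"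
    by (rule sum.cong[OF refl], rule sum.swap)
  also have "\<dots> = qf n A (\<lambda>k. \<Sum>j<n. Q $$ (k,j) * x j)"
    unfolding qf_def
  proof (intro sum.cong refl)
    fix k l assume kl: "k \<in> {..<n}" "l \<in> {..<n}"
    have "(\<Sum>i<n. \<Sum>j<n. x i * Q $$ (i,k) * A $$ (k,l) * Q $$ (l,j) * x j)
       = (\<Sum>i<n. Q $$ (k,i) * x i) * A $$ (k,l) * (\<Sum>j<n. Q $$ (l,j) * x j)"
      using sQ kl unfolding symm_def
      by (simp add: sum_distrib_left sum_distrib_right mult_ac)
    then show "(\<Sum>i<n. \<Sum>j<n. x i * Q $$ (i,k) * A $$ (k,l) * Q $$ (l,j) * x j)
       = (\<Sum>j<n. Q $$ (k,j) * x j) * A $$ (k,l) * (\<Sum>j<n. Q $$ (l,j) * x j)" by simp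
  qed
  finally show ?thesis .
qed

lemma det_QAQ:
  fixes Q A :: "real mat"
  assumes Q: "Q \<in> carrier_mat n n" and A: "A \<in> carrier_mat n n" and QQ: "Q * Q = 1\<^sub>m n"
  shows "det (Q * A * Q) = det A"
proof -
  have QA: "Q * A \<in> carrier_mat n n" using Q A by auto
  have "det (Q * A * Q) = det Q * det A * det Q" using det_mult[OF QA Q] det_mult[OF Q A] by simp
  also have "det Q * det Q = 1" using det_mult[OF Q Q] QQ by simp
  then have "det Q * det A * det Q = det A" by (simp add: algebra_simps)
  finally show ?thesis .
qed

lemma symm_QAQ:
  assumes Q: "Q \<in> carrier_mat n n" and A: "A \<in> carrier_mat n n" and sQ: "symm n Q" and sA: "symm n A"
  shows "symm n (Q * A * Q)"
  unfolding symm_def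
proof (intro allI impI)
  fix i j assume ij: "i < n" "j < n"
  have "(Q * A * Q) $$ (j,i) = (\<Sum>l<n. \<Sum>k<n. Q $$ (j,k) * A $$ (k,l) * Q $$ (l,i))"
    by (rule QAQ_entry[OF Q A ij(2) ij(1)])
  also have "\<dots> = (\<Sum>k<n. \<Sum>l<n. Q $$ (j,k) * A $$ (k,l) * Q $$ (l,i))" by (rule sum.swap)
  also have "\<dots> = (\<Sum>k<n. \<Sum>l<n. Q $$ (i,l) * A $$ (l,k) * Q $$ (k,j))"
    using sQ sA ij unfolding symm_def by (intro sum.cong refl) (simp add: mult_ac)
  also have "\<dots> = (Q * A * Q) $$ (i,j)" by (rule QAQ_entry[OF Q A ij, symmetric])
  finally show "(Q * A * Q) $$ (i,j) = (Q * A * Q) $$ (j,i)" by simp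
qed

lemma psd_QAQ:
  assumes Q: "Q \<in> carrier_mat n n" and A: "A \<in> carrier_mat n n" and sQ: "symm n Q" and pA: "psd n A"
  shows "psd n (Q * A * Q)"
  using pA unfolding psd_def qf_QAQ[OF Q A sQ] by blast

lemma trace_QAQ:
  fixes Q A :: "real mat"
  assumes Q: "Q \<in> carrier_mat n n" and A: "A \<in> carrier_mat n n" and QQ: "Q * Q = 1\<^sub>m n"
  shows "(\<Sum>i<n. (Q * A * Q) $$ (i,i)) = (\<Sum>i<n. A $$ (i,i))"
proof -
  have qq: "(\<Sum>i<n. Q $$ (l,i) * Q $$ (i,k)) = (if k = l then 1 else 0)" if "l < n" "k < n" for l k
    using mult_entry[OF Q Q that] QQ that by auto
  have "(\<Sum>i<n. (Q * A * Q) $$ (i,i)) = (\<Sum>i<n. \<Sum>l<n. \<Sum>k<n. Q $$ (i,k) * A $$ (k,l) * Q $$ (l,i))"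
    by (rule sum.cong, auto simp: QAQ_entry[OF Q A])
  also have "\<dots> = (\<Sum>l<n. \<Sum>i<n. \<Sum>k<n. Q $$ (i,k) * A $$ (k,l) * Q $$ (l,i))" by (rule sum.swap)
  also have "\<dots> = (\<Sum>l<n. \<Sum>k<n. \<Sum>i<n. Q $$ (i,k) * A $$ (k,l) * Q $$ (l,i))"
    by (rule sum.cong[OF refl], rule sum.swap)
  also have "\<dots> = (\<Sum>l<n. \<Sum>k<n. A $$ (k,l) * (if k = l then 1 else 0))"
  proof (intro sum.cong refl)
    fix l k assume "l \<in> {..<n}" "k \<in> {..<n}"
    then show "(\<Sum>i<n. Q $$ (i,k) * A $$ (k,l) * Q $$ (l,i)) = A $$ (k,l) * (if k = l then 1 else 0)"
    proof -
      have "(\<Sum>i<n. Q $$ (i,k) * A $$ (k,l) * Q $$ (l,i)) = A $$ (k,l) * (\<Sum>i<n. Q $$ (l,i) * Q $$ (i,k))"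
        unfolding sum_distrib_left by (rule sum.cong) (auto simp: mult_ac)
      then show ?thesis using qq[of l k] \<open>l \<in> {..<n}\<close> \<open>k \<in> {..<n}\<close> by simp
    qed
  qed
  also have "\<dots> = (\<Sum>l<n. A $$ (l,l))"
    by (rule sum.cong[OF refl], rule sum_delta_r, simp)
  finally show ?thesis .
qed

lemma QAQ_00:
  assumes Q: "Q \<in> carrier_mat n n" and A: "A \<in> carrier_mat n n" and sQ: "symm n Q" and n: "0 < n"
  shows "(Q * A * Q) $$ (0,0) = qf n A (\<lambda>k. Q $$ (k,0))"
proof -
  have "(Q * A * Q) $$ (0,0) = qf n (Q * A * Q) (\<lambda>i. if i = 0 then 1 else 0)"
    by (rule qf_delta[symmetric], rule n)
  also have "\<dots> = qf n A (\<lambda>k. \<Sum>j<n. Q $$ (k,j) * (if j = 0 then 1 else 0))" by (rule qf_QAQ[OF Q A sQ])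
  also have "(\<lambda>k. \<Sum>j<n. Q $$ (k,j) * (if j = 0 then 1 else 0)) = (\<lambda>k. Q $$ (k,0))"
    by (rule ext, rule sum_delta_r, rule n)
  finally show ?thesis .
qed

lemma qf_neg: "qf n A (\<lambda>k. - x k) = qf n A x" unfolding qf_def by simp

lemma sum_expand4: "(\<Sum>k\<in>S. (a k - b k) * (c k - d k)) = (\<Sum>k\<in>S. a k * c k) - (\<Sum>k\<in>S. a k * d k) - (\<Sum>k\<in>S. b k * c k) + (\<Sum>k\<in>S. b k * (d k::real))"
  by (simp add: algebra_simps sum.distrib sum_subtractf)

lemma householder:
  assumes n: "0 < n" and u: "(\<Sum>i<n. (u i)^2) = 1"
  shows "\<exists>Q. Q \<in> carrier_mat n n \<and> symm n Q \<and> Q * Q = 1\<^sub>m n \<and> (\<forall>k<n. Q $$ (k,0) = - (if u 0 \<ge> 0 then u k else - u k))"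
proof -
  define v where "v = (\<lambda>k. if u 0 \<ge> 0 then u k else - u k)"
  have v1: "(\<Sum>i<n. (v i)^2) = 1" using u by (cases "0 \<le> u 0") (simp_all add: v_def)
  have v0: "v 0 \<ge> 0" by (simp add: v_def)
  define w where "w = (\<lambda>k. (if k = 0 then 1 else 0) + v k)"
  have w0: "w 0 > 0" using v0 by (simp add: w_def)
  have ww: "(\<Sum>k<n. w k * w k) = 2 * w 0"
  proof -
    have "(\<Sum>k<n. w k * w k) = (\<Sum>k<n. (if k = 0 then 1 else 0) + 2 * v k * (if k = 0 then 1 else 0) + (v k)^2)"
      by (rule sum.cong, auto simp: w_def power2_eq_square algebra_simps)
    also have "\<dots> = 1 + 2 * v 0 + 1" using n v1 by (simp add: sum.distrib sum_delta_r)
    finally show ?thesis by (simp add: w_def)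
  qed
  define Q where "Q = mat n n (\<lambda>(i,j). (if i = j then 1 else 0) - w i * w j / w 0)"
  have Q: "Q \<in> carrier_mat n n" by (simp add: Q_def)
  have sQ: "symm n Q" unfolding symm_def Q_def by (auto simp: mult_ac)
  have QQ: "Q * Q = 1\<^sub>m n"
  proof (rule eq_matI)
    fix i j assume "i < dim_row (1\<^sub>m n :: real mat)" "j < dim_col (1\<^sub>m n :: real mat)"
    then have ij: "i < n" "j < n" by auto
    have "(Q * Q) $$ (i,j) = (\<Sum>k<n. Q $$ (i,k) * Q $$ (k,j))" by (rule mult_entry[OF Q Q ij])
    also have "\<dots> = (\<Sum>k<n. ((if k = i then 1 else 0) - w i * w k / w 0) * ((if k = j then 1 else 0) - w k * w j / w 0))"
      by (rule sum.cong, auto simp: Q_def ij)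
    also have "\<dots> = (if i = j then 1 else 0) - w i * w j / w 0 - w i * w j / w 0 + w i * w j / (w 0 * w 0) * (\<Sum>k<n. w k * w k)"
      unfolding sum_expand4
    proof -
      have h1: "(\<Sum>k<n. (if k = i then 1 else 0) * (if k = j then 1 else (0::real))) = (if i = j then 1 else 0)"
        using sum_delta_l[OF ij(1), of "\<lambda>k. if k = j then 1 else (0::real)"] by simp
      have h2: "(\<Sum>k<n. (if k = i then 1 else 0) * (w k * w j / w 0)) = w i * w j / w 0"
        by (rule sum_delta_l[OF ij(1)])
      have h3: "(\<Sum>k<n. w i * w k / w 0 * (if k = j then 1 else 0)) = w i * w j / w 0"
        by (rule sum_delta_r[OF ij(2)])
      have h4: "(\<Sum>k<n. w i * w k / w 0 * (w k * w j / w 0)) = w i * w j / (w 0 * w 0) * (\<Sum>k<n. w k * w k)"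
        unfolding sum_distrib_left by (rule sum.cong) (use w0 in \<open>auto simp: field_simps\<close>)
      show "(\<Sum>k<n. (if k = i then 1 else 0) * (if k = j then 1 else 0)) - (\<Sum>k<n. (if k = i then 1 else 0) * (w k * w j / w 0)) -
        (\<Sum>k<n. w i * w k / w 0 * (if k = j then 1 else 0)) + (\<Sum>k<n. w i * w k / w 0 * (w k * w j / w 0)) =
        (if i = j then 1 else 0) - w i * w j / w 0 - w i * w j / w 0 + w i * w j / (w 0 * w 0) * (\<Sum>k<n. w k * w k)"
        unfolding h1 h2 h3 h4 ..
    qed
    also have "\<dots> = (if i = j then 1 else 0)" unfolding ww using w0 by (simp add: field_simps)
    finally show "(Q * Q) $$ (i,j) = 1\<^sub>m n $$ (i,j)" using ij by simp
  qed (use Q in auto)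
  have col: "\<forall>k<n. Q $$ (k,0) = - v k"
    using n w0 by (auto simp: Q_def w_def)
  show ?thesis using Q sQ QQ col unfolding v_def by blast
qed



lemma amgm:
  assumes m: "m \<ge> 1" and c: "\<forall>i<m. c i \<ge> (0::real)"
  shows "(\<Prod>i<m. c i) \<le> ((\<Sum>i<m. c i) / m)^m"
proof -
  define P where "P = (\<Prod>i<m. c i)"
  have P0: "P \<ge> 0" unfolding P_def using c by (intro prod_nonneg) auto
  have "(\<Sum>i\<in>{..<m}. c i / card {..<m}) \<ge> (\<Prod>i\<in>{..<m}. c i) powr (1 / card {..<m})"
    by (rule arith_geom_mean) (use m c in \<open>auto simp: lessThan_empty_iff\<close>)
  then have g: "P powr (1 / m) \<le> (\<Sum>i<m. c i) / m" by (simp add: P_def sum_divide_distrib)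
  have "(P powr (1 / m))^m \<le> ((\<Sum>i<m. c i) / m)^m" by (rule power_mono[OF g], simp)
  moreover have "(P powr (1 / m))^m = P"
  proof (cases "P = 0")
    case True then show ?thesis using m by simp
  next
    case False
    then have Pp: "P > 0" using P0 by simp
    have "(P powr (1 / m))^m = (P powr (1 / m)) powr (real m)" using Pp by (simp add: powr_realpow)
    also have "\<dots> = P powr (1 / m * m)" by (simp add: powr_powr)
    also have "\<dots> = P" using m Pp by simp
    finally show ?thesis .
  qed
  ultimately show ?thesis by (simp add: P_def)
qed

lemma det_bound:
  assumes C: "C \<in> carrier_mat n n" and sC: "symm n C" and pC: "psd n C" and n: "n \<ge> 2"
    and u: "(\<Sum>i<n. (u i)^2) = 1"
  shows "det C \<le> qf n C u * (((\<Sum>i<n. C $$ (i,i)) - qf n C u) / (n - 1)) ^ (n - 1) \<and> qf n C u \<le> (\<Sum>i<n. C $$ (i,i))"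
proof -
  obtain Q where Q: "Q \<in> carrier_mat n n" and sQ: "symm n Q" and QQ: "Q * Q = 1\<^sub>m n"
    and col: "\<forall>k<n. Q $$ (k,0) = - (if u 0 \<ge> 0 then u k else - u k)"
    using householder[of n u] n u by auto
  define C' where "C' = Q * C * Q"
  have C': "C' \<in> carrier_mat n n" using Q C by (simp add: C'_def)
  have sC': "symm n C'" unfolding C'_def by (rule symm_QAQ[OF Q C sQ sC])
  have pC': "psd n C'" unfolding C'_def by (rule psd_QAQ[OF Q C sQ pC])
  have detC: "det C = det C'" unfolding C'_def by (rule det_QAQ[OF Q C QQ, symmetric])
  have tr: "(\<Sum>i<n. C' $$ (i,i)) = (\<Sum>i<n. C $$ (i,i))" unfolding C'_def by (rule trace_QAQ[OF Q C QQ])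
  have "C' $$ (0,0) = qf n C (\<lambda>k. Q $$ (k,0))" unfolding C'_def by (rule QAQ_00[OF Q C sQ], use n in simp)
  also have "qf n C (\<lambda>k. Q $$ (k,0)) = qf n C (\<lambda>k. - (if u 0 \<ge> 0 then u k else - u k))"
    unfolding qf_def using col by (intro sum.cong refl) auto
  also have "\<dots> = qf n C u"
    by (cases "u 0 \<ge> 0") (simp_all add: qf_neg)
  finally have c00: "C' $$ (0,0) = qf n C u" .
  define \<rho> where "\<rho> = qf n C u"
  have rho0: "\<rho> \<ge> 0" using pC unfolding psd_def \<rho>_def by blast
  obtain m where nm: "n = Suc m" and m1: "m \<ge> 1" using n by (cases n) auto
  have diag: "C' $$ (i,i) \<ge> 0" if "i < n" for i
  proof -
    have "qf n C' (\<lambda>k. if k = i then 1 else 0) = C' $$ (i,i)" by (rule qf_delta[OF that])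
    then show ?thesis using pC' unfolding psd_def by metis
  qed
  have "det C' \<le> (\<Prod>i<n. C' $$ (i,i))" by (rule hadamard[OF C' sC' pC'])
  also have "\<dots> = \<rho> * (\<Prod>i<m. C' $$ (Suc i, Suc i))"
    unfolding nm by (simp only: prod.lessThan_Suc_shift c00 \<rho>_def)
  also have "(\<Prod>i<m. C' $$ (Suc i, Suc i)) \<le> ((\<Sum>i<m. C' $$ (Suc i, Suc i)) / m) ^ m"
    by (rule amgm[OF m1], use diag nm in auto)
  also have trr: "(\<Sum>i<m. C' $$ (Suc i, Suc i)) = (\<Sum>i<n. C $$ (i,i)) - \<rho>"
  proof -
    have "(\<Sum>i<n. C' $$ (i,i)) = C' $$ (0,0) + (\<Sum>i<m. C' $$ (Suc i, Suc i))"
      unfolding nm by (simp only: sum.lessThan_Suc_shift)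
    then show ?thesis using tr c00 \<rho>_def by simp
  qed
  finally have "det C' \<le> \<rho> * (((\<Sum>i<n. C $$ (i,i)) - \<rho>) / m) ^ m"
    using rho0 by (simp add: mult_left_mono)
  moreover have "(\<Sum>i<m. C' $$ (Suc i, Suc i)) \<ge> 0" using diag nm by (intro sum_nonneg) auto
  ultimately show ?thesis using detC nm \<rho>_def trr by simp
qed



lemma sum_if_eq:
  assumes "i < (n::nat)"
  shows "(\<Sum>j<n. if j = i then X else Y j) = (\<Sum>j<n. Y j) - Y i + (X::real)"
proof -
  have "(\<Sum>j<n. if j = i then X else Y j) = (\<Sum>j<n. Y j + (if j = i then X - Y j else 0))"
    by (rule sum.cong) auto
  also have "\<dots> = (\<Sum>j<n. Y j) + (X - Y i)" using assms by (simp add: sum.distrib)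
  finally show ?thesis by simp
qed

lemma CS2:
  fixes f g :: "nat \<Rightarrow> nat \<Rightarrow> real"
  shows "(\<Sum>i<n. \<Sum>j<n. f i j * g i j)^2 \<le> (\<Sum>i<n. \<Sum>j<n. (f i j)^2) * (\<Sum>i<n. \<Sum>j<n. (g i j)^2)"
proof -
  have e: "(\<Sum>i<n. \<Sum>j<n. h i j) = (\<Sum>p\<in>{..<n}\<times>{..<n}. h (fst p) (snd p))" for h :: "nat \<Rightarrow> nat \<Rightarrow> real"
    by (subst sum.cartesian_product) (simp add: case_prod_beta)
  show ?thesis unfolding e by (rule Cauchy_Schwarz_ineq_sum)
qed

lemma frob:
  fixes A :: "real mat"
  assumes n: "n \<ge> 1" and u: "(\<Sum>i<n. (u i)^2) = 1"
  defines "T \<equiv> (\<Sum>i<n. A $$ (i,i))" and "F \<equiv> (\<Sum>i<n. \<Sum>j<n. (A $$ (i,j))^2)"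
  shows "(qf n A u - T / n)^2 \<le> (n - 1) / n * (F - T^2 / n)"
proof -
  define m where "m = T / n"
  define f where "f = (\<lambda>i j. if j = i then A $$ (i,j) - m else A $$ (i,j))"
  define g where "g = (\<lambda>i j. if j = i then u i * u j - 1 / n else u i * u j)"
  have nz: "real n \<noteq> 0" using n by simp
  have fg: "(\<Sum>i<n. \<Sum>j<n. f i j * g i j) = qf n A u - m"
  proof -
    have "(\<Sum>i<n. \<Sum>j<n. f i j * g i j) = (\<Sum>i<n. (\<Sum>j<n. u i * A $$ (i,j) * u j) - A $$ (i,i) * (u i)^2 + (A $$ (i,i) - m) * ((u i)^2 - 1/n))"
    proof (rule sum.cong[OF refl])
      fix i assume i: "i \<in> {..<n}"
      have "(\<Sum>j<n. f i j * g i j) = (\<Sum>j<n. if j = i then (A $$ (i,i) - m) * ((u i)^2 - 1/n) else u i * A $$ (i,j) * u j)"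
        by (rule sum.cong) (auto simp: f_def g_def power2_eq_square mult_ac)
      also have "\<dots> = (\<Sum>j<n. u i * A $$ (i,j) * u j) - A $$ (i,i) * (u i)^2 + (A $$ (i,i) - m) * ((u i)^2 - 1/n)"
        using i by (subst sum_if_eq) (auto simp: power2_eq_square mult_ac)
      finally show "(\<Sum>j<n. f i j * g i j) = \<dots>" .
    qed
    also have "\<dots> = qf n A u - T / n - m * (\<Sum>i<n. (u i)^2) + m * n / n"
      by (simp add: qf_def sum.distrib sum_subtractf algebra_simps sum_divide_distrib[symmetric] sum_distrib_left[symmetric] T_def)
    also have "\<dots> = qf n A u - m" using nz u by (simp add: m_def)
    finally show ?thesis .
  qed
  have ff: "(\<Sum>i<n. \<Sum>j<n. (f i j)^2) = F - T^2 / n"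
  proof -
    have "(\<Sum>i<n. \<Sum>j<n. (f i j)^2) = (\<Sum>i<n. (\<Sum>j<n. (A $$ (i,j))^2) - (A $$ (i,i))^2 + (A $$ (i,i) - m)^2)"
    proof (rule sum.cong[OF refl])
      fix i assume i: "i \<in> {..<n}"
      have "(\<Sum>j<n. (f i j)^2) = (\<Sum>j<n. if j = i then (A $$ (i,i) - m)^2 else (A $$ (i,j))^2)"
        by (rule sum.cong) (auto simp: f_def)
      also have "\<dots> = (\<Sum>j<n. (A $$ (i,j))^2) - (A $$ (i,i))^2 + (A $$ (i,i) - m)^2"
        using i by (subst sum_if_eq) auto
      finally show "(\<Sum>j<n. (f i j)^2) = \<dots>" .
    qed
    also have "\<dots> = F - 2 * m * T + n * m^2"
      by (simp add: F_def T_def sum.distrib sum_subtractf power2_diff sum_distrib_left[symmetric] algebra_simps)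
    also have "\<dots> = F - T^2 / n" using nz by (simp add: m_def field_simps power2_eq_square)
    finally show ?thesis .
  qed
  have gg: "(\<Sum>i<n. \<Sum>j<n. (g i j)^2) = (n - 1) / n"
  proof -
    have "(\<Sum>i<n. \<Sum>j<n. (g i j)^2) = (\<Sum>i<n. (u i)^2 * (\<Sum>j<n. (u j)^2) - (u i)^2 * (u i)^2 + ((u i)^2 - 1/n)^2)"
    proof (rule sum.cong[OF refl])
      fix i assume i: "i \<in> {..<n}"
      have "(\<Sum>j<n. (g i j)^2) = (\<Sum>j<n. if j = i then ((u i)^2 - 1/n)^2 else (u i)^2 * (u j)^2)"
        by (rule sum.cong) (auto simp: g_def power2_eq_square mult_ac)
      also have "\<dots> = (\<Sum>j<n. (u i)^2 * (u j)^2) - (u i)^2 * (u i)^2 + ((u i)^2 - 1/n)^2"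
        using i by (subst sum_if_eq) auto
      finally show "(\<Sum>j<n. (g i j)^2) = (u i)^2 * (\<Sum>j<n. (u j)^2) - (u i)^2 * (u i)^2 + ((u i)^2 - 1/n)^2"
        by (simp add: sum_distrib_left)
    qed
    also have "\<dots> = (\<Sum>i<n. (u i)^2 - 2 / n * (u i)^2 + 1 / n^2)"
      using u by (intro sum.cong refl) (simp add: power2_diff power2_eq_square field_simps)
    also have "\<dots> = 1 - 2 / n + n / n^2"
      using u by (simp add: sum.distrib sum_subtractf sum_distrib_left[symmetric] sum_divide_distrib[symmetric])
    also have "\<dots> = (n - 1) / n" using nz by (simp add: field_simps power2_eq_square)
    finally show ?thesis .
  qed
  have "(qf n A u - m)^2 \<le> (F - T^2 / n) * ((n - 1) / n)"
    using CS2[where n=n and f=f and g=g] unfolding fg ff gg .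
  then show ?thesis using n by (simp add: m_def mult.commute of_nat_diff)
qed



lemma qf_sb: "qf n (Sigma_sb n d V \<tau>) y = (V * real d * unit_ball_vol (real d) / 2) * qf n (cmat n (x_par d \<tau>)) y"
  unfolding qf_def Sigma_sb_def cmat_def sum_distrib_left
  by (intro sum.cong refl) (simp add: field_simps)

lemma sq_sum: "(\<Sum>i\<in>A. f i)^2 = (\<Sum>i\<in>A. \<Sum>j\<in>A. f i * (f j :: real))"
  by (simp add: power2_eq_square sum_product)

lemma qf_sp: "qf n (Sigma_sp n d V \<tau>) y = (V * real d ^ 2 * unit_ball_vol (real d) ^ 2) * (\<Sum>i<n. y i / a_par d \<tau> i)^2"
proof -
  have "qf n (Sigma_sp n d V \<tau>) y = (\<Sum>i<n. \<Sum>j<n. (V * real d ^ 2 * unit_ball_vol (real d) ^ 2) * ((y i / a_par d \<tau> i) * (y j / a_par d \<tau> j)))"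
    unfolding qf_def Sigma_sp_def by (intro sum.cong refl) (simp add: field_simps)
  also have "\<dots> = (V * real d ^ 2 * unit_ball_vol (real d) ^ 2) * (\<Sum>i<n. y i / a_par d \<tau> i)^2"
    unfolding sq_sum sum_distrib_left ..
  finally show ?thesis .
qed

lemma qf_add: "A \<in> carrier_mat n n \<Longrightarrow> B \<in> carrier_mat n n \<Longrightarrow> qf n (A + B) y = qf n A y + qf n B y"
  unfolding qf_def by (simp add: sum.distrib[symmetric] algebra_simps)

lemma qf_smult: "A \<in> carrier_mat n n \<Longrightarrow> qf n (c \<cdot>\<^sub>m A) y = c * qf n A y"
  unfolding qf_def by (simp add: sum_distrib_left mult_ac)

lemma qf_div: "qf n A (\<lambda>i. x i / r) = qf n A x / r^2"
  unfolding qf_def by (simp add: sum_divide_distrib power2_eq_square mult_ac)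

lemma eig_qf:
  assumes M: "M \<in> carrier_mat n n" and v: "v \<in> carrier_vec n" and e: "M *\<^sub>v v = l \<cdot>\<^sub>v v"
  shows "qf n M (\<lambda>i. v $ i) = l * (\<Sum>i<n. (v $ i)^2)"
proof -
  have r: "(\<Sum>j<n. M $$ (i,j) * v $ j) = l * v $ i" if i: "i < n" for i
  proof -
    have "(M *\<^sub>v v) $ i = l * v $ i" using e i v by simp
    moreover have "(M *\<^sub>v v) $ i = (\<Sum>j<n. M $$ (i,j) * v $ j)"
      using M v i by (simp add: scalar_prod_def atLeast0LessThan)
    ultimately show ?thesis by simp
  qed
  have "qf n M (\<lambda>i. v $ i) = (\<Sum>i<n. v $ i * (\<Sum>j<n. M $$ (i,j) * v $ j))"
    unfolding qf_def by (simp add: sum_distrib_left mult_ac)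
  also have "\<dots> = (\<Sum>i<n. l * (v $ i)^2)" by (intro sum.cong refl) (simp add: r power2_eq_square)
  finally show ?thesis by (simp add: sum_distrib_left)
qed

theorem theorem7p6:
  fixes n d :: nat and V c :: real and \<tau> :: "nat \<Rightarrow> real"
  assumes "d \<ge> 1" and "n \<ge> 2" and "V \<ge> 0" and "c > 0"
    and "\<tau> 0 > - real d / 2"
    and "\<And>i j. i < j \<Longrightarrow> j < n \<Longrightarrow> \<tau> i < \<tau> j"
  shows "\<forall>l. eigenvalue (Sigma_cr n d V c \<tau>) l \<longrightarrow>
     (if c \<le> 1 then
        S_lower n d V \<tau> \<le> l \<and>
        l \<le> S_upper n d V \<tau> + (\<Sum>i<n. c * V * real d ^ 2 * unit_ball_vol (real d) ^ 2 / (a_par d \<tau> i)^2)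
      else
        S_lower n d V \<tau> / c \<le> l \<and>
        l \<le> S_upper n d V \<tau> / c + (\<Sum>i<n. V * real d ^ 2 * unit_ball_vol (real d) ^ 2 / (a_par d \<tau> i)^2))"
proof (intro allI impI)
  fix l assume ev: "eigenvalue (Sigma_cr n d V c \<tau>) l"
  note n2 = assms(2)
  define M where "M = Sigma_cr n d V c \<tau>"
  have sb: "Sigma_sb n d V \<tau> \<in> carrier_mat n n" by (simp add: Sigma_sb_def)
  have sp: "Sigma_sp n d V \<tau> \<in> carrier_mat n n" by (simp add: Sigma_sp_def)
  have M: "M \<in> carrier_mat n n" using sb sp by (simp add: M_def Sigma_cr_def)
  obtain v where v: "v \<in> carrier_vec n" and v0: "v \<noteq> 0\<^sub>v n" and e: "M *\<^sub>v v = l \<cdot>\<^sub>v v"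
    using ev M unfolding eigenvalue_def eigenvector_def M_def by auto
  define N where "N = (\<Sum>i<n. (v $ i)^2)"
  have Npos: "N > 0"
  proof -
    obtain i where i: "i < n" and vi: "v $ i \<noteq> 0" using v v0 by (auto simp: vec_eq_iff)
    have "0 < (v $ i)^2" using vi by simp
    also have "\<dots> \<le> N" unfolding N_def using i by (intro member_le_sum) auto
    finally show ?thesis .
  qed
  define u where "u = (\<lambda>i. v $ i / sqrt N)"
  have u1: "(\<Sum>i<n. (u i)^2) = 1" using Npos by (simp add: u_def power_divide sum_divide_distrib[symmetric] N_def[symmetric])
  have lu: "qf n M u = l"
    unfolding u_def qf_div eig_qf[OF M v e] N_def[symmetric] using Npos by simp
  define \<kappa> where "\<kappa> = unit_ball_vol (real d)"
  have \<kappa>0: "\<kappa> \<ge> 0" unfolding \<kappa>_def by simp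
  define K where "K = V * real d * \<kappa> / 2"
  define K2 where "K2 = V * real d ^ 2 * \<kappa> ^ 2"
  have K0: "K \<ge> 0" unfolding K_def using assms(3) \<kappa>0 by simp
  have K20: "K2 \<ge> 0" unfolding K2_def using assms(3) by simp
  define x where "x = x_par d \<tau>"
  have xpos: "\<forall>i<n. x i > 0"
  proof (intro allI impI)
    fix i assume i: "i < n"
    have "\<tau> i \<ge> \<tau> 0" using assms(6)[of 0 i] i by (cases "i = 0") force+
    then show "x i > 0" using assms(5) by (simp add: x_def x_par_def)
  qed
  define C where "C = cmat n x"
  have C: "C \<in> carrier_mat n n" by (simp add: C_def cmat_def)
  define \<rho> where "\<rho> = qf n C u"
  define s where "s = (\<Sum>i<n. u i / a_par d \<tau> i)"
  define G where "G = (\<Sum>i<n. 1 / (a_par d \<tau> i)^2)"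
  have sG: "s^2 \<le> G"
  proof -
    have "s^2 \<le> (\<Sum>i<n. (u i)^2) * (\<Sum>i<n. (1 / a_par d \<tau> i)^2)"
      unfolding s_def using Cauchy_Schwarz_ineq_sum[of "u" "\<lambda>i. 1 / a_par d \<tau> i" "{..<n}"] by simp
    then show ?thesis using u1 by (simp add: G_def power_divide)
  qed
  have lc: "l = (if c \<le> 1 then K * \<rho> + c * (K2 * s^2) else (1/c) * (K * \<rho>) + K2 * s^2)"
    unfolding lu[symmetric] M_def Sigma_cr_def using sb sp
    by (simp add: qf_add qf_smult qf_sb qf_sp K_def K2_def \<kappa>_def \<rho>_def C_def x_def s_def)
  define T where "T = (\<Sum>i<n. C $$ (i,i))"
  define F where "F = (\<Sum>i<n. \<Sum>j<n. (C $$ (i,j))^2)"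
  define Q where "Q = Q_par n d \<tau>"
  have hT: "T = (\<Sum>i<n. 1 / (2 * x i))"
    unfolding T_def C_def cmat_def by (intro sum.cong refl) simp
  have hQ: "Q = real n * F - T^2"
  proof -
    have "(\<Sum>l<n. \<Sum>k<n. real n / (x k + x l)^2) = real n * F"
      unfolding F_def C_def cmat_def sum_distrib_left
      by (intro sum.cong refl) (simp add: power_divide add.commute)
    then show ?thesis unfolding Q_def Q_par_def hT x_def by simp
  qed
  have Tpos: "T > 0" unfolding hT using xpos n2 by (intro sum_pos) (auto simp: lessThan_empty_iff)
  have nr: "real n \<ge> 2" using n2 by simp
  have frob': "(\<rho> - T / n)^2 \<le> (real n - 1) / n * (F - T^2 / n)"
    unfolding \<rho>_def T_def F_def by (rule frob) (use n2 u1 in auto)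
  have hfrob: "\<bar>\<rho> - T / n\<bar> \<le> sqrt ((real n - 1) * Q) / n"
  proof -
    have "(real n - 1) / n * (F - T^2 / n) = ((real n - 1) * Q) / (real n)^2"
      unfolding hQ using nr by (simp add: field_simps power2_eq_square)
    then have "\<bar>\<rho> - T / n\<bar> \<le> sqrt (((real n - 1) * Q) / (real n)^2)"
      using frob' by (metis real_sqrt_abs real_sqrt_le_mono)
    also have "\<dots> = sqrt ((real n - 1) * Q) / n" by (simp add: real_sqrt_divide)
    finally show ?thesis .
  qed
  have sym: "symm n C" unfolding C_def by (rule symm_cmat)
  have psdC: "psd n C" unfolding C_def by (rule psd_cmat[OF xpos])
  have rho0: "\<rho> \<ge> 0" using psdC unfolding psd_def \<rho>_def by blast
  have db: "det C \<le> \<rho> * ((T - \<rho>) / (n - 1)) ^ (n - 1) \<and> \<rho> \<le> T"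
    unfolding \<rho>_def T_def by (rule det_bound[OF C sym psdC n2 u1])
  have detC: "det C = cprod n x" unfolding C_def by (rule cauchy_det[OF xpos])
  define r where "r = sqrt (real n - 1)"
  have rpos: "r > 0" unfolding r_def using nr by simp
  have r2: "r^2 = real n - 1" unfolding r_def using nr by simp
  define B where "B = T / n + sqrt Q / (n * r)"
  have sQ0: "sqrt Q \<ge> 0"
  proof -
    have "0 \<le> (\<rho> - T / n)^2" by simp
    then have "0 \<le> (real n - 1) / n * (F - T^2 / n)" using frob' by linarith
    moreover have pp: "(real n - 1) / n > 0" using nr by simp
    ultimately have "F - T^2 / n \<ge> 0"
      by (metis linorder_not_le mult_pos_neg)
    then have "Q \<ge> 0" unfolding hQ using nr by (simp add: field_simps)
    then show ?thesis by simp
  qed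
  have Bpos: "B > 0" unfolding B_def using Tpos nr rpos sQ0 by (intro add_pos_nonneg) auto
  have hB: "((\<Sum>i<n. sqrt (real n - 1) / (2 * x_par d \<tau> i)) + sqrt (Q_par n d \<tau>)) / (real n * sqrt (real n - 1)) = B"
  proof -
    have "(\<Sum>i<n. sqrt (real n - 1) / (2 * x_par d \<tau> i)) = r * T"
      unfolding hT r_def x_def sum_distrib_left by (intro sum.cong refl) simp
    then show ?thesis unfolding B_def Q_def[symmetric] r_def[symmetric] using rpos nr
      by (simp add: field_simps)
  qed
  have base: "(T - \<rho>) / (n - 1) \<le> B"
  proof -
    have s1: "T / n - \<rho> \<le> r * sqrt Q / n" using hfrob unfolding r_def by (simp add: real_sqrt_mult)
    have "T - \<rho> \<le> B * (real n - 1)"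
    proof -
      have "B * (real n - 1) = B * r^2" by (simp add: r2)
      also have "\<dots> = T * (real n - 1) / n + r * sqrt Q / n"
        unfolding B_def r2[symmetric] using rpos nr by (simp add: field_simps power2_eq_square)
      finally have hBn: "B * (real n - 1) = T * (real n - 1) / n + r * sqrt Q / n" .
      have e: "T * (real n - 1) / n = T - T / n" using nr by (simp add: field_simps)
      show ?thesis using hBn e s1 by linarith
    qed
    then show ?thesis using nr by (simp add: of_nat_diff pos_divide_le_eq)
  qed
  have base0: "(T - \<rho>) / (n - 1) \<ge> 0" using db nr by simp
  have pw: "((T - \<rho>) / (n - 1)) ^ (n - 1) \<le> B ^ (n - 1)" by (rule power_mono[OF base base0])
  have cp: "cprod n x \<le> \<rho> * B ^ (n - 1)"
    using db detC mult_left_mono[OF pw rho0] by linarith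
  have den: "(\<Prod>i<n. \<Prod>j<n. x i + x j) > 0"
    using xpos by (intro prod_pos) (auto intro: add_pos_pos)
  have Bp: "B ^ (n - 1) > 0" using Bpos by simp
  have hSL: "S_lower n d V \<tau> = K * (cprod n x / B ^ (n - 1))"
    unfolding S_lower_def hB unfolding cprod_def K_def \<kappa>_def x_def[symmetric]
    using den Bp by (simp add: field_simps)
  have lower: "S_lower n d V \<tau> \<le> K * \<rho>"
    unfolding hSL using cp Bp K0 by (intro mult_left_mono) (simp_all add: divide_le_eq mult.commute)
  have hSU: "S_upper n d V \<tau> = K * ((T + sqrt ((real n - 1) * Q)) / n)"
    unfolding S_upper_def K_def \<kappa>_def hT Q_def x_def using nr by (simp add: field_simps)
  have upper: "K * \<rho> \<le> S_upper n d V \<tau>"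
    unfolding hSU using hfrob nr K0 by (intro mult_left_mono) (simp_all add: field_simps abs_le_iff)
  have hG1: "(\<Sum>i<n. c * V * real d ^ 2 * unit_ball_vol (real d) ^ 2 / (a_par d \<tau> i)^2) = c * K2 * G"
    unfolding G_def K2_def \<kappa>_def sum_distrib_left by (intro sum.cong refl) simp
  have hG2: "(\<Sum>i<n. V * real d ^ 2 * unit_ball_vol (real d) ^ 2 / (a_par d \<tau> i)^2) = K2 * G"
    unfolding G_def K2_def \<kappa>_def sum_distrib_left by (intro sum.cong refl) simp
  have s20: "s^2 \<ge> 0" by simp
  have K2s: "K2 * s^2 \<le> K2 * G" using sG K20 by (rule mult_left_mono)
  have K2s0: "K2 * s^2 \<ge> 0" using K20 by simp
  show "if c \<le> 1 then
        S_lower n d V \<tau> \<le> l \<and>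
        l \<le> S_upper n d V \<tau> + (\<Sum>i<n. c * V * real d ^ 2 * unit_ball_vol (real d) ^ 2 / (a_par d \<tau> i)^2)
      else
        S_lower n d V \<tau> / c \<le> l \<and>
        l \<le> S_upper n d V \<tau> / c + (\<Sum>i<n. V * real d ^ 2 * unit_ball_vol (real d) ^ 2 / (a_par d \<tau> i)^2)"
  proof (cases "c \<le> 1")
    case True
    have l: "l = K * \<rho> + c * (K2 * s^2)" using lc True by simp
    have "c * (K2 * s^2) \<le> c * (K2 * G)" using K2s assms(4) by simp
    moreover have "c * (K2 * s^2) \<ge> 0" using K2s0 assms(4) by simp
    ultimately show ?thesis using True l lower upper hG1 by simp
  next
    case False
    have l: "l = (1/c) * (K * \<rho>) + K2 * s^2" using lc False by simp
    have "S_lower n d V \<tau> / c \<le> (1/c) * (K * \<rho>)" using lower assms(4) by (simp add: divide_right_mono)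
    moreover have "(1/c) * (K * \<rho>) \<le> S_upper n d V \<tau> / c" using upper assms(4) by (simp add: divide_right_mono)
    ultimately show ?thesis using False l K2s K2s0 hG2 by simp
  qed
qed

end
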